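(* Let $A\in\mathbb{R}^{m\times n}$ with $r:=\mathrm{rank}(A)$. Let $T$ be an ordered subset of $r$ elements of $\{1,\dots,n\}$ and let $\hat A:=A[:,T]$ be the $m\times r$ submatrix of $A$ formed by the columns $T$. If $\mathrm{rank}(\hat A)=r$, let $\hat H:=\hat A^+=(\hat A^\top\hat A)^{-1}\hat A^\top$, and let $H\in\mathbb{R}^{n\times m}$ be the matrix whose rows indexed by $T$ are given by $\hat H$ (in the order of $T$) and all other rows are zero. Then $H$ satisfies $AHA=A$, $HAH=H$ and $(AH)^\top=AH$; i.e., $H$ is an ah-symmetric reflexive generalized inverse of $A$.
   Context: $A[:,T]$ denotes the submatrix of $A$ formed by the columns with indices in $T$. A matrix $H$ is a generalized inverse of $A$ if $AHA=A$, reflexive if additionally $HAH=H$, and ah-symmetric if $AH$ is symmetric. *)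

theory Defs
  imports "Jordan_Normal_Form.DL_Rank" "Jordan_Normal_Form.Gauss_Jordan_Elimination"
begin

definition col_submat :: "'a mat \<Rightarrow> nat list \<Rightarrow> 'a mat" where
  "col_submat A T = mat (dim_row A) (length T) (\<lambda>(i,j). A $$ (i, T ! j))"

definition mat_rank :: "'a :: field mat \<Rightarrow> nat" where
  "mat_rank A = vec_space.rank (dim_row A) A"

definition embed_rows :: "nat \<Rightarrow> nat list \<Rightarrow> 'a :: zero mat \<Rightarrow> 'a mat" where
  "embed_rows n T Hh = mat n (dim_col Hh)
     (\<lambda>(k,i). if k \<in> set T then Hh $$ (THE j. j < length T \<and> T ! j = k, i) else 0)"

end

theory Submission
  imports Defs
begin
lemma rank_full_distinct:
  assumes B: "(B :: real mat) \<in> carrier_mat m r" and rk: "vec_space.rank m B = r"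
  shows "distinct (cols B)"
proof (rule ccontr)
  assume nd: "\<not> distinct (cols B)"
  interpret vec_space "TYPE(real)" m .
  obtain S where S: "maximal S (\<lambda>T. T \<subseteq> set (cols B) \<and> lin_indpt T)"
    using maximal_exists[of "(\<lambda>T. T \<subseteq> set (cols B) \<and> lin_indpt T)" "card (set (cols B))" "{}"]
    by (meson List.finite_set card_mono empty_iff empty_subsetI finite_lin_indpt2 rev_finite_subset)
  then have "card S \<le> card (set (cols B))" by (simp add: card_mono maximal_def)
  also have "\<dots> < r" using nd B
    by (metis card_distinct card_length carrier_matD(2) cols_length nat_less_le)
  finally show False using rank_card_indpt[OF B S] rk by simp
qed

lemma rank_full_ker:
  assumes B: "(B :: real mat) \<in> carrier_mat m r" and rk: "vec_space.rank m B = r"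
    and x: "x \<in> carrier_vec r" and Bx: "B *\<^sub>v x = 0\<^sub>v m"
  shows "x = 0\<^sub>v r"
proof (rule ccontr)
  assume "x \<noteq> 0\<^sub>v r"
  interpret vec_space "TYPE(real)" m .
  have d: "distinct (cols B)" by (rule rank_full_distinct[OF B rk])
  have "lin_indpt (set (cols B))" using full_rank_lin_indpt[OF B _ d] rk by simp
  moreover have "lin_dep (set (cols B))" using lin_depI[OF B x \<open>x \<noteq> 0\<^sub>v r\<close> Bx d] .
  ultimately show False by simp
qed

lemma col_in_span:
  assumes A: "(A::real mat) \<in> carrier_mat m n" and B: "B \<in> carrier_mat m r"
    and rk: "vec_space.rank m B = r" and rkA: "vec_space.rank m A = r"
    and sub: "set (cols B) \<subseteq> set (cols A)"
    and j: "j < n"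
  shows "\<exists>x \<in> carrier_vec r. B *\<^sub>v x = col A j"
proof -
  interpret vec_space "TYPE(real)" m .
  have d: "distinct (cols B)" by (rule rank_full_distinct[OF B rk])
  have li: "lin_indpt (set (cols B))" using full_rank_lin_indpt[OF B _ d] rk by simp
  have SC: "set (cols B) \<subseteq> carrier_vec m" using B cols_dim by blast
  have cC: "col A j \<in> carrier_vec m" using A j by auto
  have "col A j \<in> span (set (cols B))"
  proof (rule ccontr)
    assume ns: "col A j \<notin> span (set (cols B))"
    have nin: "col A j \<notin> set (cols B)" using ns in_own_span[OF SC] by blast
    have li2: "lin_indpt (set (cols B) \<union> {col A j})"
      using lin_dep_iff_in_span[OF SC li cC nin] ns by simp
    have "col A j \<in> set (cols A)" using A j by (simp add: cols_def)
    hence sub2: "set (cols B) \<union> {col A j} \<subseteq> set (cols A)" using sub by auto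
    have "card (set (cols B) \<union> {col A j}) = r + 1"
      using nin d B by (simp add: distinct_card)
    with rank_ge_card_indpt[OF A sub2 li2] rkA show False by simp
  qed
  hence "col A j \<in> col_space B" unfolding col_space_def .
  thus ?thesis unfolding col_space_eq[OF B] using B by auto
qed

lemma self_scalar_zero:
  fixes v :: "real vec"
  assumes "v \<in> carrier_vec k" "v \<bullet> v = 0"
  shows "v = 0\<^sub>v k"
proof -
  have "(\<Sum>i<k. v $ i * v $ i) = 0" using assms by (simp add: scalar_prod_def lessThan_atLeast0)
  hence "\<forall>i\<in>{..<k}. v $ i * v $ i = 0" by (subst (asm) sum_nonneg_eq_0_iff) auto
  thus ?thesis using assms(1) by (intro eq_vecI) auto
qed

theorem theorem3p3:
  fixes A :: "real mat" and m n :: nat and T :: "nat list"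
  assumes A: "A \<in> carrier_mat m n"
    and T: "distinct T" "set T \<subseteq> {..<n}" "length T = mat_rank A"
    and full: "mat_rank (col_submat A T) = mat_rank A"
  defines "Ahat \<equiv> col_submat A T"
  defines "Hhat \<equiv> the (mat_inverse (Ahat\<^sup>T * Ahat)) * Ahat\<^sup>T"
  defines "H \<equiv> embed_rows n T Hhat"
  shows "A * H * A = A \<and> H * A * H = H \<and> (A * H)\<^sup>T = A * H"
proof -
  define r where "r = length T"
  have Ah: "Ahat \<in> carrier_mat m r" using A unfolding Ahat_def col_submat_def r_def by auto
  have rkA: "vec_space.rank m A = r" using T(3) A unfolding r_def mat_rank_def by auto
  have rkAh: "vec_space.rank m Ahat = r" using full T(3) Ah unfolding r_def mat_rank_def Ahat_def by auto
  have Tn: "\<And>j. j < r \<Longrightarrow> T ! j < n" using T(2) unfolding r_def by (meson lessThan_iff nth_mem subsetD)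
  have colAh: "\<And>j. j < r \<Longrightarrow> col Ahat j = col A (T ! j)"
    using A Tn unfolding Ahat_def col_submat_def r_def by (auto simp: col_def)
  have sub: "set (cols Ahat) \<subseteq> set (cols A)"
  proof
    fix c assume "c \<in> set (cols Ahat)"
    then obtain j where j: "j < r" "c = col Ahat j" using Ah by (auto simp: in_set_conv_nth)
    thus "c \<in> set (cols A)" using colAh[OF j(1)] Tn[OF j(1)] A by (auto simp: in_set_conv_nth intro!: exI[of _ "T ! j"])
  qed
  define M where "M = Ahat\<^sup>T * Ahat"
  have M: "M \<in> carrier_mat r r" using Ah unfolding M_def by auto
  have "det M \<noteq> 0"
  proof
    assume "det M = 0"
    then obtain v where v: "v \<in> carrier_vec r" "v \<noteq> 0\<^sub>v r" "M *\<^sub>v v = 0\<^sub>v r"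
      using det_0_iff_vec_prod_zero_field[OF M] by blast
    have Av: "Ahat *\<^sub>v v \<in> carrier_vec m" using Ah v(1) by auto
    have "(Ahat *\<^sub>v v) \<bullet> (Ahat *\<^sub>v v) = (Ahat\<^sup>T *\<^sub>v (Ahat *\<^sub>v v)) \<bullet> v"
      using transpose_vec_mult_scalar[OF Ah v(1) Av] by simp
    also have "\<dots> = (M *\<^sub>v v) \<bullet> v" unfolding M_def
      using Ah v(1) by (subst assoc_mult_mat_vec) auto
    also have "\<dots> = 0" using v by simp
    finally have "Ahat *\<^sub>v v = 0\<^sub>v m" using Av by (intro self_scalar_zero) auto
    from rank_full_ker[OF Ah rkAh v(1) this] v(2) show False by simp
  qed
  from det_non_zero_imp_unit[OF M this, of "()"]
  have "mat_inverse M \<noteq> None" using mat_inverse(1)[OF M, of "()"] by auto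
  then obtain Mi where Mi_eq: "mat_inverse M = Some Mi" by auto
  from mat_inverse(2)[OF M Mi_eq] have MMi: "M * Mi = 1\<^sub>m r" and MiM: "Mi * M = 1\<^sub>m r"
    and Mi: "Mi \<in> carrier_mat r r" by auto
  have Hh_def: "Hhat = Mi * Ahat\<^sup>T" unfolding Hhat_def M_def[symmetric] Mi_eq by simp
  have Hh: "Hhat \<in> carrier_mat r m" using Mi Ah unfolding Hh_def by auto
  define E :: "real mat" where "E = mat n r (\<lambda>(k,j). if T ! j = k then 1 else 0)"
  have E: "E \<in> carrier_mat n r" unfolding E_def by auto
  have dT: "\<And>i j. i < r \<Longrightarrow> j < r \<Longrightarrow> (T ! i = T ! j) = (i = j)"
    using T(1) unfolding r_def by (simp add: nth_eq_iff_index_eq)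
  have HE: "H = E * Hhat"
  proof (rule eq_matI)
    show "dim_row H = dim_row (E * Hhat)" "dim_col H = dim_col (E * Hhat)"
      using E Hh unfolding H_def embed_rows_def by auto
    fix k i assume k: "k < dim_row (E * Hhat)" and i: "i < dim_col (E * Hhat)"
    hence k: "k < n" and i: "i < m" using E Hh by auto
    have "(E * Hhat) $$ (k, i) = (\<Sum>j<r. (if T ! j = k then 1 else 0) * Hhat $$ (j, i))"
      using E Hh k i unfolding E_def
      by (simp add: scalar_prod_def lessThan_atLeast0 row_def col_def)
    also have "\<dots> = (if k \<in> set T then Hhat $$ (THE j. j < length T \<and> T ! j = k, i) else 0)"
    proof (cases "k \<in> set T")
      case True
      then obtain j0 where j0: "j0 < r" "T ! j0 = k" unfolding r_def by (auto simp: in_set_conv_nth)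
      have th: "(THE j. j < length T \<and> T ! j = k) = j0"
        using j0 dT unfolding r_def by (intro the_equality) auto
      have "(\<Sum>j<r. (if T ! j = k then 1 else 0) * Hhat $$ (j, i)) =
            (\<Sum>j<r. if j = j0 then Hhat $$ (j, i) else 0)"
        by (rule sum.cong) (use j0 dT in auto)
      also have "\<dots> = Hhat $$ (j0, i)" using j0 by simp
      finally show ?thesis using True th by simp
    next
      case False
      hence "\<And>j. j < r \<Longrightarrow> T ! j \<noteq> k" unfolding r_def by auto
      thus ?thesis using False by simp
    qed
    also have "\<dots> = H $$ (k, i)" using k i Hh unfolding H_def embed_rows_def by auto
    finally show "H $$ (k, i) = (E * Hhat) $$ (k, i)" by simp
  qed
  have AE: "A * E = Ahat"
  proof (rule eq_matI)
    show "dim_row (A * E) = dim_row Ahat" "dim_col (A * E) = dim_col Ahat" using A E Ah by auto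
    fix i j assume i: "i < dim_row Ahat" and j: "j < dim_col Ahat"
    hence i: "i < m" and j: "j < r" using Ah by auto
    have "(A * E) $$ (i, j) = (\<Sum>k<n. A $$ (i, k) * (if T ! j = k then 1 else 0))"
      using A E i j unfolding E_def
      by (simp add: scalar_prod_def lessThan_atLeast0 row_def col_def)
    also have "\<dots> = (\<Sum>k<n. if k = T ! j then A $$ (i, k) else 0)"
      by (rule sum.cong) auto
    also have "\<dots> = A $$ (i, T ! j)" using Tn[OF j] by simp
    also have "\<dots> = Ahat $$ (i, j)" using A i j unfolding Ahat_def col_submat_def r_def by auto
    finally show "(A * E) $$ (i, j) = Ahat $$ (i, j)" .
  qed
  define X :: "real mat" where
    "X = mat r n (\<lambda>(i,j). (SOME x. x \<in> carrier_vec r \<and> Ahat *\<^sub>v x = col A j) $ i)"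
  have X: "X \<in> carrier_mat r n" unfolding X_def by auto
  have AX: "Ahat * X = A"
  proof (rule mat_col_eqI)
    show "dim_row (Ahat * X) = dim_row A" "dim_col (Ahat * X) = dim_col A" using A Ah X by auto
    fix j assume "j < dim_col A"
    hence j: "j < n" using A by auto
    define x where "x = (SOME x. x \<in> carrier_vec r \<and> Ahat *\<^sub>v x = col A j)"
    have "\<exists>x. x \<in> carrier_vec r \<and> Ahat *\<^sub>v x = col A j"
      using col_in_span[OF A Ah rkAh rkA sub j] by blast
    hence x: "x \<in> carrier_vec r" "Ahat *\<^sub>v x = col A j" unfolding x_def by (metis (mono_tags, lifting) someI_ex)+
    have "col X j = x" using x(1) j unfolding X_def x_def[symmetric]
      by (intro eq_vecI) (auto simp: x_def)
    thus "col (Ahat * X) j = col A j" using col_mult2[OF Ah X j] x(2) by simp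
  qed
  have HhAh: "Hhat * Ahat = 1\<^sub>m r"
    unfolding Hh_def using Mi Ah MiM unfolding M_def
    by (subst assoc_mult_mat[of _ r r _ m _ r]) auto
  have Mt: "M\<^sup>T = M" unfolding M_def using Ah by (simp add: transpose_mult[of _ r m _ r])
  have MitM: "Mi\<^sup>T * M = 1\<^sub>m r"
  proof -
    have "Mi\<^sup>T * M = Mi\<^sup>T * M\<^sup>T" using Mt by simp
    also have "\<dots> = (M * Mi)\<^sup>T" using transpose_mult[OF M Mi] by simp
    finally show ?thesis using MMi by simp
  qed
  have Mit: "Mi\<^sup>T = Mi"
  proof -
    have "Mi\<^sup>T = Mi\<^sup>T * (M * Mi)" using MMi Mi by simp
    also have "\<dots> = (Mi\<^sup>T * M) * Mi" using Mi M by (simp add: assoc_mult_mat[of _ r r _ r _ r])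
    finally show ?thesis using MitM Mi by simp
  qed
  have AH: "A * H = Ahat * Hhat" unfolding HE
    using assoc_mult_mat[OF A E Hh] AE by simp
  have 1: "A * H * A = A"
  proof -
    have "A * H * A = Ahat * Hhat * (Ahat * X)" using AH AX by simp
    also have "\<dots> = Ahat * (Hhat * Ahat) * X"
      using Ah Hh X by (simp add: assoc_mult_mat[of _ m r _ m _ n] assoc_mult_mat[of _ m r _ r _ n] assoc_mult_mat[of _ r m _ r _ n] assoc_mult_mat[of _ m r _ m _ r])
    also have "\<dots> = A" using HhAh Ah AX by simp
    finally show ?thesis .
  qed
  have 2: "H * A * H = H"
  proof -
    have HA: "Hhat * A \<in> carrier_mat r n" using Hh A by auto
    have EH: "E * Hhat \<in> carrier_mat n m" using Hh E by auto
    have AEc: "A * E \<in> carrier_mat m r" using A E by auto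
    have "H * A * H = E * (Hhat * A) * (E * Hhat)" unfolding HE
      using assoc_mult_mat[OF E Hh A] by simp
    also have "\<dots> = E * ((Hhat * A) * (E * Hhat))" using assoc_mult_mat[OF E HA EH] .
    also have "(Hhat * A) * (E * Hhat) = Hhat * (A * (E * Hhat))" using assoc_mult_mat[OF Hh A EH] .
    also have "A * (E * Hhat) = (A * E) * Hhat" using assoc_mult_mat[OF A E Hh] by simp
    also have "Hhat * ((A * E) * Hhat) = (Hhat * (A * E)) * Hhat" using assoc_mult_mat[OF Hh AEc Hh] by simp
    also have "E * ((Hhat * (A * E)) * Hhat) = E * (Hhat * (A * E)) * Hhat"
      using assoc_mult_mat[OF E _ Hh, of "Hhat * (A * E)"] Hh AEc by simp
    also have "\<dots> = E * Hhat" using AE HhAh E by simp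
    finally show ?thesis unfolding HE .
  qed
  have 3: "(A * H)\<^sup>T = A * H"
  proof -
    have "(A * H)\<^sup>T = (Ahat * (Mi * Ahat\<^sup>T))\<^sup>T" using AH Hh_def by simp
    also have "\<dots> = (Mi * Ahat\<^sup>T)\<^sup>T * Ahat\<^sup>T" using transpose_mult[OF Ah Hh] Hh_def by simp
    also have "\<dots> = (Ahat * Mi\<^sup>T) * Ahat\<^sup>T" using transpose_mult[of Mi r r "Ahat\<^sup>T" m] Mi Ah by simp
    also have "\<dots> = Ahat * (Mi * Ahat\<^sup>T)" using Mit Ah Mi by (simp add: assoc_mult_mat[of _ m r _ r _ m])
    finally show ?thesis using AH Hh_def by simp
  qed
  show ?thesis using 1 2 3 by simp
qed
end
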